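(* Let $D\in\mathbb{D}^n_+$, $W\in\mathbb{R}^{n\times n}$, $u\in\mathbb{R}^n$, and define $f_1(x)=-Dx+[Wx+u]_0^1$. Suppose $W-D$ is Lyapunov diagonally stable. Then there exists a unique $x^\star\in\mathbb{R}^n$ such that $f_1(x^\star)=0$. In particular, for each $u$, the linear-threshold network $\dot x=-Dx+[Wx+u]_0^1$ admits a unique equilibrium.
   Context: $\mathbb{D}^n_+$ is the set of $n\times n$ diagonal matrices with positive diagonal entries. $[z]_0^1=\max(0,\min(z,1))$, applied elementwise to vectors. A matrix $M$ is Lyapunov diagonally stable if $M^\top\Lambda+\Lambda M\prec0$ for some $\Lambda\in\mathbb{D}^n_+$. *)

theory Defs
  imports "HOL-Analysis.Analysis"
begin

definition pos_diag :: "real^'n^'n \<Rightarrow> bool" where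
  "pos_diag D \<longleftrightarrow> (\<forall>i j. i \<noteq> j \<longrightarrow> D $ i $ j = 0) \<and> (\<forall>i. D $ i $ i > 0)"

definition neg_def :: "real^'n^'n \<Rightarrow> bool" where
  "neg_def M \<longleftrightarrow> transpose M = M \<and> (\<forall>x. x \<noteq> 0 \<longrightarrow> x \<bullet> (M *v x) < 0)"

definition lyap_diag_stable :: "real^'n^'n \<Rightarrow> bool" where
  "lyap_diag_stable M \<longleftrightarrow>
     (\<exists>\<Lambda>. pos_diag \<Lambda> \<and> neg_def (transpose M ** \<Lambda> + \<Lambda> ** M))"

definition clip01 :: "real^'n \<Rightarrow> real^'n" where
  "clip01 z = (\<chi> i. max 0 (min (z $ i) 1))"

end

theory Submission
  imports Defs
begin

lemma diag_mult:
  assumes "pos_diag D"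
  shows "(D *v x) $ i = D $ i $ i * x $ i"
proof -
  have "(D *v x) $ i = (\<Sum>j\<in>UNIV. D $ i $ j * x $ j)"
    by (simp add: matrix_vector_mult_def)
  also have "\<dots> = (\<Sum>j\<in>UNIV. if j = i then D $ i $ i * x $ i else 0)"
    by (rule sum.cong) (use assms in \<open>auto simp: pos_diag_def\<close>)
  also have "\<dots> = D $ i $ i * x $ i" by simp
  finally show ?thesis .
qed

lemma clip_mono_prod:
  fixes a b :: real
  shows "(max 0 (min a 1) - max 0 (min b 1)) * ((a - b) - (max 0 (min a 1) - max 0 (min b 1))) \<ge> 0"
proof -
  consider "a \<le> b" | "b \<le> a" by linarith
  then show ?thesis
  proof cases
    case 1
    then have "max 0 (min a 1) - max 0 (min b 1) \<le> 0"
      "(a - b) - (max 0 (min a 1) - max 0 (min b 1)) \<le> 0" by auto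
    then show ?thesis by (simp add: mult_nonpos_nonpos)
  next
    case 2
    then have "max 0 (min a 1) - max 0 (min b 1) \<ge> 0"
      "(a - b) - (max 0 (min a 1) - max 0 (min b 1)) \<ge> 0" by auto
    then show ?thesis by simp
  qed
qed

theorem proposition1:
  fixes D W :: "real^'n^'n" and u :: "real^'n"
  assumes "pos_diag D"
    and "lyap_diag_stable (W - D)"
  shows "\<exists>!x. - (D *v x) + clip01 (W *v x + u) = 0"
proof -
  have Dpos: "\<And>i. D $ i $ i > 0" using assms(1) by (simp add: pos_diag_def)
  have sol_iff: "(- (D *v x) + clip01 (W *v x + u) = 0) \<longleftrightarrow>
      (\<forall>i. D $ i $ i * x $ i = clip01 (W *v x + u) $ i)" for x
    by (auto simp: vec_eq_iff diag_mult[OF assms(1)])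
  define g where "g x = (\<chi> i. clip01 (W *v x + u) $ i / D $ i $ i)" for x
  define S where "S = cbox (0::real^'n) (\<chi> i. 1 / D $ i $ i)"
  obtain x where "x \<in> S" "g x = x"
  proof (rule brouwer)
    show "compact S" unfolding S_def by simp
    show "convex S" unfolding S_def by (simp add: convex_box)
    have "0 \<in> S" unfolding S_def using Dpos
      by (auto simp: mem_box_cart intro!: less_imp_le)
    then show "S \<noteq> {}" by blast
    show "continuous_on S g" unfolding g_def clip01_def
      by (intro continuous_intros continuous_on_vec_lambda linear_continuous_on
          matrix_vector_mul_linear) (use Dpos in \<open>auto simp: less_le\<close>)
    show "g \<in> S \<rightarrow> S" unfolding g_def S_def clip01_def using Dpos
      by (auto simp: mem_box_cart less_imp_le intro!: divide_right_mono divide_nonneg_pos)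
  qed
  then have xs: "- (D *v x) + clip01 (W *v x + u) = 0"
    unfolding sol_iff g_def
  proof (intro allI)
    fix i
    assume "(\<chi> i. clip01 (W *v x + u) $ i / D $ i $ i) = x"
    then have "clip01 (W *v x + u) $ i / D $ i $ i = x $ i" by (metis vec_lambda_beta)
    then show "D $ i $ i * x $ i = clip01 (W *v x + u) $ i"
      using Dpos[of i] by (simp add: field_simps)
  qed
  moreover have "y = x" if ys: "- (D *v y) + clip01 (W *v y + u) = 0" for y
  proof (rule ccontr)
    assume ne: "y \<noteq> x"
    define d where "d = x - y"
    have d0: "d \<noteq> 0" using ne by (simp add: d_def)
    obtain L where L: "pos_diag L" "neg_def (transpose (W - D) ** L + L ** (W - D))"
      using assms(2) by (auto simp: lyap_diag_stable_def)
    define A where "A = W - D"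
    have neg: "d \<bullet> ((transpose A ** L + L ** A) *v d) < 0"
      using L d0 by (simp add: neg_def_def A_def)
    have eq: "d \<bullet> ((transpose A ** L + L ** A) *v d) = 2 * ((L *v d) \<bullet> (A *v d))"
    proof -
      have "d \<bullet> ((transpose A ** L + L ** A) *v d)
          = d \<bullet> (transpose A *v (L *v d)) + d \<bullet> (L *v (A *v d))"
        by (simp add: matrix_vector_mult_add_rdistrib matrix_vector_mul_assoc[symmetric]
            inner_add_right)
      also have "d \<bullet> (transpose A *v (L *v d)) = (L *v d) \<bullet> (A *v d)"
      proof -
        have "d \<bullet> (transpose A *v (L *v d)) = (transpose A *v (L *v d)) \<bullet> d"
          by (rule inner_commute)
        also have "\<dots> = ((L *v d) v* A) \<bullet> d" by simp
        also have "\<dots> = (L *v d) \<bullet> (A *v d)" by (rule dot_lmul_matrix)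
        finally show ?thesis .
      qed
      also have "d \<bullet> (L *v (A *v d)) = (L *v d) \<bullet> (A *v d)"
        by (simp add: inner_vec_def diag_mult[OF L(1)] mult.commute mult.left_commute)
      finally show ?thesis by simp
    qed
    have "(L *v d) \<bullet> (A *v d) \<ge> 0"
    proof -
      have "(L *v d) \<bullet> (A *v d) = (\<Sum>i\<in>UNIV. (L *v d) $ i * (A *v d) $ i)"
        by (simp add: inner_vec_def)
      also have "\<dots> \<ge> 0"
      proof (rule sum_nonneg)
        fix i
        define a where "a = (W *v x + u) $ i"
        define b where "b = (W *v y + u) $ i"
        define c where "c = max 0 (min a 1) - max 0 (min b 1)"
        have Dd: "D $ i $ i * d $ i = c"
          using xs ys unfolding sol_iff[of x] sol_iff[of y] d_def c_def a_def b_def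
          by (simp add: right_diff_distrib clip01_def)
        have Ad: "(A *v d) $ i = (a - b) - c"
          unfolding A_def a_def b_def using Dd
          by (simp add: matrix_vector_mult_diff_rdistrib matrix_vector_right_distrib
              diag_mult[OF assms(1)] d_def matrix_vector_mult_diff_distrib algebra_simps)
        have Lpos: "L $ i $ i > 0" using L(1) by (simp add: pos_diag_def)
        have di: "d $ i = c / D $ i $ i" using Dd Dpos[of i]
          by (simp add: field_simps)
        have "(L *v d) $ i * (A *v d) $ i = (L $ i $ i / D $ i $ i) * (c * ((a - b) - c))"
          using diag_mult[OF L(1)] di Ad by simp
        also have "\<dots> \<ge> 0"
        proof (rule mult_nonneg_nonneg)
          show "0 \<le> L $ i $ i / D $ i $ i" using Lpos Dpos[of i] by simp
          show "0 \<le> c * ((a - b) - c)" unfolding c_def by (rule clip_mono_prod)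
        qed
        finally show "(L *v d) $ i * (A *v d) $ i \<ge> 0" .
      qed
      finally show ?thesis .
    qed
    with neg eq show False by simp
  qed
  ultimately show ?thesis by blast
qed

end
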